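(* Consider the Bak–Sneppen model on a finite connected simple graph $G$ with parameter $p\in(0,1)$, realized via the graphical construction, and fix $L>0$, $k\in\mathbb Z_+$ and adjacent vertices $x\sim y$. If the level-$k$ block $\{x,y\}\times((k-1)L,kL]$ is nice and at least one of $\eta_x((k-1)L)$, $\eta_y((k-1)L)$ equals $0$, then $\eta_x(kL)=\eta_y(kL)=0$.
   Context: Let $G=(V,E)$ be a finite connected simple graph and $p\in(0,1)$. Graphical construction of the Bak–Sneppen model: each vertex $x$ carries an independent rate-$1$ Poisson clock; each ring of the clock at $x$ carries a mark, namely a family of independent Bernoulli$(p)$ values, one for each vertex of the neighbourhood $\{x\}\cup\{y:y\sim x\}$ (marks independent across rings). When the clock at $x$ rings at a time when $\eta_x=0$, or when $\eta_y=1$ for all $y\in V$, the values $\eta_z$ on the neighbourhood of $x$ are set equal to the mark values; otherwise (the ring is "muted") nothing happens. For $x\in V$ and $k\in\mathbb Z_+$, the level-$k$ $x$-stick is $\{x\}\times((k-1)L,kL]$. For $A\subseteq\{x\}\cup\{y:y\sim x\}$, the $x$-stick is $A$-good if every clock ring at $x$ during $((k-1)L,kL]$ has mark value $0$ at every vertex of $A$ (a stick with no rings is good). For $x\sim y$, the level-$k$ block $\{x,y\}\times((k-1)L,kL]$ is nice if: (a) the clocks at $x$ and at $y$ each ring at least once during $((k-1)L,kL]$; (b) both the $x$-stick and the $y$-stick are $\{x,y\}$-good; (c) for every $v\sim x$ the $v$-stick is $\{x\}$-good and for every $w\sim y$ the $w$-stick is $\{y\}$-good, and if $v$ is adjacent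 to both $x$ and $y$ then the $v$-stick is $\{x,y\}$-good (all sticks at level $k$). *)

theory Defs
  imports Main "HOL.Real"
begin

definition simple_graph :: "'a set \<Rightarrow> ('a \<Rightarrow> 'a \<Rightarrow> bool) \<Rightarrow> bool" where
  "simple_graph V E \<longleftrightarrow> finite V \<and> V \<noteq> {} \<and>
     (\<forall>u v. E u v \<longrightarrow> u \<in> V \<and> v \<in> V) \<and>
     (\<forall>u v. E u v \<longrightarrow> E v u) \<and> (\<forall>u. \<not> E u u)"

definition connected_graph :: "'a set \<Rightarrow> ('a \<Rightarrow> 'a \<Rightarrow> bool) \<Rightarrow> bool" where
  "connected_graph V E \<longleftrightarrow> (\<forall>u\<in>V. \<forall>v\<in>V. E\<^sup>*\<^sup>* u v)"

definition nbhd :: "('a \<Rightarrow> 'a \<Rightarrow> bool) \<Rightarrow> 'a \<Rightarrow> 'a set" where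
  "nbhd E x = insert x {y. E y x}"

text \<open>A realisation of the graphical construction: R x is the set of ring times of the
  clock at x; mk x t z is the mark value at vertex z attached to the ring of x at time t;
  eta t z is the configuration at time t.\<close>

definition BS_step :: "'a set \<Rightarrow> ('a \<Rightarrow> 'a \<Rightarrow> bool) \<Rightarrow> 'a \<Rightarrow> ('a \<Rightarrow> nat) \<Rightarrow> ('a \<Rightarrow> nat) \<Rightarrow> ('a \<Rightarrow> nat)" where
  "BS_step V E x mark \<zeta> =
     (if \<zeta> x = 0 \<or> (\<forall>y\<in>V. \<zeta> y = 1)
      then (\<lambda>z. if z \<in> nbhd E x then mark z else \<zeta> z)
      else \<zeta>)"

text \<open>Almost-sure properties of the Poisson clocks and the marks: ring times are positive,
  locally finite, and distinct clocks never ring simultaneously; marks are 0/1.\<close>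
definition clocks_ok :: "'a set \<Rightarrow> ('a \<Rightarrow> 'a \<Rightarrow> bool) \<Rightarrow> ('a \<Rightarrow> real set) \<Rightarrow> ('a \<Rightarrow> real \<Rightarrow> 'a \<Rightarrow> nat) \<Rightarrow> bool" where
  "clocks_ok V E R mk \<longleftrightarrow>
     (\<forall>x\<in>V. R x \<subseteq> {0<..} \<and> (\<forall>T. finite (R x \<inter> {..T}))) \<and>
     (\<forall>x\<in>V. \<forall>y\<in>V. x \<noteq> y \<longrightarrow> R x \<inter> R y = {}) \<and>
     (\<forall>x\<in>V. \<forall>t\<in>R x. \<forall>z\<in>nbhd E x. mk x t z \<in> {0,1})"

definition BS_evolution :: "'a set \<Rightarrow> ('a \<Rightarrow> 'a \<Rightarrow> bool) \<Rightarrow> ('a \<Rightarrow> real set) \<Rightarrow> ('a \<Rightarrow> real \<Rightarrow> 'a \<Rightarrow> nat) \<Rightarrow> (real \<Rightarrow> 'a \<Rightarrow> nat) \<Rightarrow> bool" where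
  "BS_evolution V E R mk \<eta> \<longleftrightarrow>
     (\<forall>z\<in>V. \<eta> 0 z \<in> {0,1}) \<and>
     (\<forall>s t. 0 \<le> s \<and> s \<le> t \<and> (\<forall>x\<in>V. R x \<inter> {s<..t} = {}) \<longrightarrow> \<eta> t = \<eta> s) \<and>
     (\<forall>x\<in>V. \<forall>t\<in>R x. \<exists>s. 0 \<le> s \<and> s < t \<and> (\<forall>y\<in>V. R y \<inter> {s..<t} = {}) \<and>
                          \<eta> t = BS_step V E x (mk x t) (\<eta> s))"

definition stick_good :: "('a \<Rightarrow> real set) \<Rightarrow> ('a \<Rightarrow> real \<Rightarrow> 'a \<Rightarrow> nat) \<Rightarrow> real \<Rightarrow> nat \<Rightarrow> 'a \<Rightarrow> 'a set \<Rightarrow> bool" where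
  "stick_good R mk L k x A \<longleftrightarrow>
     (\<forall>t \<in> R x \<inter> {(real k - 1) * L <.. real k * L}. \<forall>a\<in>A. mk x t a = 0)"

definition block_nice :: "('a \<Rightarrow> 'a \<Rightarrow> bool) \<Rightarrow> ('a \<Rightarrow> real set) \<Rightarrow> ('a \<Rightarrow> real \<Rightarrow> 'a \<Rightarrow> nat) \<Rightarrow> real \<Rightarrow> nat \<Rightarrow> 'a \<Rightarrow> 'a \<Rightarrow> bool" where
  "block_nice E R mk L k x y \<longleftrightarrow>
     R x \<inter> {(real k - 1) * L <.. real k * L} \<noteq> {} \<and>
     R y \<inter> {(real k - 1) * L <.. real k * L} \<noteq> {} \<and>
     stick_good R mk L k x {x, y} \<and> stick_good R mk L k y {x, y} \<and>
     (\<forall>v. E v x \<longrightarrow> stick_good R mk L k v {x}) \<and>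
     (\<forall>w. E w y \<longrightarrow> stick_good R mk L k w {y}) \<and>
     (\<forall>v. E v x \<and> E v y \<longrightarrow> stick_good R mk L k v {x, y})"

end

theory Submission
  imports Defs
begin

theorem proposition1:
  fixes V :: "'a set" and E :: "'a \<Rightarrow> 'a \<Rightarrow> bool"
    and R :: "'a \<Rightarrow> real set" and mk :: "'a \<Rightarrow> real \<Rightarrow> 'a \<Rightarrow> nat"
    and \<eta> :: "real \<Rightarrow> 'a \<Rightarrow> nat"
    and p L :: real and k :: nat and x y :: 'a
  assumes "simple_graph V E" and "connected_graph V E"
    and "0 < p" and "p < 1"
    and "clocks_ok V E R mk"
    and "BS_evolution V E R mk \<eta>"
    and "0 < L" and "1 \<le> k"
    and "E x y"
    and "block_nice E R mk L k x y"
    and "\<eta> ((real k - 1) * L) x = 0 \<or> \<eta> ((real k - 1) * L) y = 0"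
  shows "\<eta> (real k * L) x = 0 \<and> \<eta> (real k * L) y = 0"
proof -
  define a where "a = (real k - 1) * L"
  define b where "b = real k * L"
  from assms(1) have finV: "finite V" and EV: "\<And>u v. E u v \<Longrightarrow> u\<in>V \<and> v\<in>V"
    and Esym: "\<And>u v. E u v \<Longrightarrow> E v u" and irr: "\<And>u. \<not> E u u"
    unfolding simple_graph_def by auto
  have xV: "x\<in>V" and yV: "y\<in>V" using EV assms(9) by auto
  have xy: "x \<noteq> y" using irr assms(9) by auto
  from assms(5) have Rfin: "\<And>v T. v\<in>V \<Longrightarrow> finite (R v \<inter> {..T})"
    and Rdisj: "\<And>v w. v\<in>V \<Longrightarrow> w\<in>V \<Longrightarrow> v\<noteq>w \<Longrightarrow> R v \<inter> R w = {}"
    unfolding clocks_ok_def by auto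
  from assms(6) have const: "\<And>s t. 0 \<le> s \<Longrightarrow> s \<le> t \<Longrightarrow> (\<forall>v\<in>V. R v \<inter> {s<..t} = {}) \<Longrightarrow> \<eta> t = \<eta> s"
    and step: "\<And>u t. u\<in>V \<Longrightarrow> t\<in>R u \<Longrightarrow> \<exists>s. 0 \<le> s \<and> s < t \<and> (\<forall>v\<in>V. R v \<inter> {s..<t} = {}) \<and> \<eta> t = BS_step V E u (mk u t) (\<eta> s)"
    unfolding BS_evolution_def by blast+
  from assms(10) have rx: "R x \<inter> {a<..b} \<noteq> {}" and ry: "R y \<inter> {a<..b} \<noteq> {}"
    and gx: "\<And>t. t \<in> R x \<Longrightarrow> a < t \<Longrightarrow> t \<le> b \<Longrightarrow> mk x t x = 0 \<and> mk x t y = 0"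
    and gy: "\<And>t. t \<in> R y \<Longrightarrow> a < t \<Longrightarrow> t \<le> b \<Longrightarrow> mk y t x = 0 \<and> mk y t y = 0"
    and gv: "\<And>v t. E v x \<Longrightarrow> t \<in> R v \<Longrightarrow> a < t \<Longrightarrow> t \<le> b \<Longrightarrow> mk v t x = 0"
    and gw: "\<And>v t. E v y \<Longrightarrow> t \<in> R v \<Longrightarrow> a < t \<Longrightarrow> t \<le> b \<Longrightarrow> mk v t y = 0"
    unfolding block_nice_def stick_good_def a_def b_def by auto
  have a0: "0 \<le> a" using assms(7,8) a_def by simp
  have ab: "a \<le> b" unfolding a_def b_def using assms(7) by simp
  define RS where "RS t = {r. (\<exists>v\<in>V. r \<in> R v) \<and> a < r \<and> r \<le> t}" for t
  define I where "I t \<longleftrightarrow> (\<eta> t x = 0 \<and> \<eta> t y = 0) \<or> (\<eta> t y = 0 \<and> R y \<inter> {a<..t} = {})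
       \<or> (\<eta> t x = 0 \<and> R x \<inter> {a<..t} = {})" for t
  have finRS: "finite (RS t)" for t
  proof -
    have "RS t \<subseteq> (\<Union>v\<in>V. R v \<inter> {..t})" unfolding RS_def by auto
    then show ?thesis using finV Rfin by (meson finite_UN_I finite_subset)
  qed
  have Ia: "I a" using assms(11) unfolding I_def a_def by auto
  have main: "\<forall>t. a \<le> t \<and> t \<le> b \<and> card (RS t) = n \<longrightarrow> I t" for n
  proof (induction n rule: less_induct)
    case (less n)
    show ?case
    proof (intro allI impI)
      fix t assume t: "a \<le> t \<and> t \<le> b \<and> card (RS t) = n"
      show "I t"
      proof (cases "RS t = {}")
        case True
        then have nr0: "\<forall>v\<in>V. R v \<inter> {a<..t} = {}" unfolding RS_def by auto
        then have "\<eta> t = \<eta> a" using const a0 t by blast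
        moreover have "R x \<inter> {a<..t} = {}" "R y \<inter> {a<..t} = {}" using nr0 xV yV by auto
        ultimately show ?thesis using Ia unfolding I_def by auto
      next
        case False
        define m where "m = Max (RS t)"
        have mRS: "m \<in> RS t" using False finRS m_def by simp
        then obtain u where uV: "u\<in>V" and mu: "m \<in> R u" and am: "a < m" and mt: "m \<le> t"
          unfolding RS_def by auto
        have nor: "\<forall>v\<in>V. R v \<inter> {m<..t} = {}"
        proof (intro ballI)
          fix v assume vV: "v\<in>V"
          { fix r assume r: "r \<in> R v" "m<r" "r \<le> t"
            then have "r \<in> RS t" using am vV unfolding RS_def by auto
            then have "r \<le> m" using finRS m_def by simp
            with r(2) have False by simp }
          then show "R v \<inter> {m<..t} = {}" by auto
        qed
        have etm: "\<eta> t = \<eta> m" using const[of m t] nor mt am a0 by simp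
        have Rsame: "R v \<inter> {a<..t} = R v \<inter> {a<..m}" if vV2: "v\<in>V" for v
        proof -
          have "R v \<inter> {m<..t} = {}" using nor vV2 by blast
          then have "\<And>r. r \<in> R v \<Longrightarrow> r \<le> t \<Longrightarrow> r \<le> m" by (meson disjoint_iff greaterThanAtMost_iff not_le)
          then show ?thesis using mt by fastforce
        qed
        have Im: "I m"
        proof -
          obtain s where s0: "0 \<le> s" and sm: "s < m" and nr: "\<forall>v\<in>V. R v \<inter> {s..<m} = {}"
            and em: "\<eta> m = BS_step V E u (mk u m) (\<eta> s)" using step[OF uV mu] by blast
          define s' where "s' = max s a"
          have es: "\<eta> s' = \<eta> s"
          proof (cases "s < a")
            case True
            have "\<forall>v\<in>V. R v \<inter> {s<..a} = {}"
            proof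
              fix v assume "v\<in>V"
              then have "R v \<inter> {s..<m} = {}" using nr by blast
              moreover have "{s<..a} \<subseteq> {s..<m}" using am by auto
              ultimately show "R v \<inter> {s<..a} = {}" by blast
            qed
            then show ?thesis using const[of s a] s0 True s'_def by simp
          next
            case False then show ?thesis using s'_def by simp
          qed
          have s'a: "a \<le> s'" "s' < m" "s' \<le> b" using s'_def sm am mt t by auto
          have nr': "\<forall>v\<in>V. R v \<inter> {s'..<m} = {}"
          proof
            fix v assume "v\<in>V"
            then have "R v \<inter> {s..<m} = {}" using nr by blast
            moreover have "{s'..<m} \<subseteq> {s..<m}" using s'_def by auto
            ultimately show "R v \<inter> {s'..<m} = {}" by blast
          qed
          have sub: "RS s' \<subset> RS t"
          proof
            show "RS s' \<subseteq> RS t" using s'a mt unfolding RS_def by auto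
            have "m \<notin> RS s'" using s'a unfolding RS_def by auto
            then show "RS s' \<noteq> RS t" using mRS by blast
          qed
          have "card (RS s') < n" using psubset_card_mono[OF finRS sub] t by simp
          then have Is: "I s'" using less s'a by blast
          have Rsplit: "R v \<inter> {a<..m} = R v \<inter> {a<..s'} \<union> (if v = u then {m} else {})"
            if vV: "v\<in>V" for v
          proof -
            have "R v \<inter> {a<..m} \<subseteq> R v \<inter> {a<..s'} \<union> (if v = u then {m} else {})"
            proof
              fix r assume r: "r \<in> R v \<inter> {a<..m}"
              show "r \<in> R v \<inter> {a<..s'} \<union> (if v = u then {m} else {})"
              proof (cases "r \<le> s'")
                case True then show ?thesis using r by auto
              next
                case False
                have "R v \<inter> {s'..<m} = {}" using nr' vV by blast
                then have "r = m" using r False by auto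
                then have "v = u" using Rdisj vV uV r mu by blast
                then show ?thesis using \<open>r=m\<close> by simp
              qed
            qed
            moreover have "R v \<inter> {a<..s'} \<union> (if v = u then {m} else {}) \<subseteq> R v \<inter> {a<..m}"
              using s'a mu am by auto
            ultimately show ?thesis by blast
          qed
          have em': "\<eta> m = BS_step V E u (mk u m) (\<eta> s')" using em es by simp
          have mtb: "m \<le> b" using mt t by simp
          show "I m"
          proof (cases "u = x")
            case True
            have mk0: "mk x m x = 0" "mk x m y = 0" using gx mu True am mtb by auto
            have ynb: "y \<in> nbhd E x" "x \<in> nbhd E x" using assms(9) Esym unfolding nbhd_def by auto
            show ?thesis
            proof (cases "\<eta> s' x = 0")
              case True
              then have "\<eta> m x = 0 \<and> \<eta> m y = 0" using em' \<open>u=x\<close> mk0 ynb unfolding BS_step_def by auto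
              then show ?thesis unfolding I_def by simp
            next
              case False
              then have h: "\<eta> s' y = 0 \<and> R y \<inter> {a<..s'} = {}" using Is unfolding I_def by auto
              then have "\<eta> m = \<eta> s'" using em' False \<open>u=x\<close> yV unfolding BS_step_def by force
              moreover have "R y \<inter> {a<..m} = {}" using Rsplit[OF yV] \<open>u=x\<close> xy h by auto
              ultimately show ?thesis using h unfolding I_def by auto
            qed
          next
            case ux: False
            show ?thesis
            proof (cases "u = y")
              case True
              have mk0: "mk y m x = 0" "mk y m y = 0" using gy mu True am mtb by auto
              have ynb: "x \<in> nbhd E y" "y \<in> nbhd E y" using assms(9) unfolding nbhd_def by auto
              show ?thesis
              proof (cases "\<eta> s' y = 0")
                case True
                then have "\<eta> m x = 0 \<and> \<eta> m y = 0" using em' \<open>u=y\<close> mk0 ynb unfolding BS_step_def by auto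
                then show ?thesis unfolding I_def by simp
              next
                case False
                then have h: "\<eta> s' x = 0 \<and> R x \<inter> {a<..s'} = {}" using Is unfolding I_def by auto
                then have "\<eta> m = \<eta> s'" using em' False \<open>u=y\<close> xV unfolding BS_step_def by force
                moreover have "R x \<inter> {a<..m} = {}" using Rsplit[OF xV] \<open>u=y\<close> xy h by auto
                ultimately show ?thesis using h unfolding I_def by auto
              qed
            next
              case uy: False
              have hx: "\<eta> m x = 0 \<or> \<eta> m x = \<eta> s' x"
              proof -
                have "x \<in> nbhd E u \<Longrightarrow> mk u m x = 0" using ux gv Esym mu am mtb unfolding nbhd_def by auto
                then show ?thesis using em' unfolding BS_step_def by auto
              qed
              have hy: "\<eta> m y = 0 \<or> \<eta> m y = \<eta> s' y"
              proof -
                have "y \<in> nbhd E u \<Longrightarrow> mk u m y = 0" using uy gw Esym mu am mtb unfolding nbhd_def by auto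
                then show ?thesis using em' unfolding BS_step_def by auto
              qed
              have "R x \<inter> {a<..m} = R x \<inter> {a<..s'}" using Rsplit[OF xV] ux by simp
              moreover have "R y \<inter> {a<..m} = R y \<inter> {a<..s'}" using Rsplit[OF yV] uy by simp
              ultimately show ?thesis using Is hx hy unfolding I_def by auto
            qed
          qed
        qed
        then show "I t" using etm Rsame xV yV unfolding I_def by simp
      qed
    qed
  qed
  have "I b" using main ab by blast
  then show ?thesis using rx ry unfolding I_def b_def a_def by auto
qed

end
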